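(* Let $R$ be a commutative ring. The following are equivalent: (i) $R$ is a p.p. ring; (ii) $R$ is a p.f. ring and $T(R)$ is an absolutely flat ring; (iii) $T(R)$ is an absolutely flat ring and the idempotents of $R$ can be lifted along each localization of $R$, i.e. for every multiplicative subset $S\subseteq R$ and every idempotent $x\in S^{-1}R$ there is an idempotent $e\in R$ with $e/1=x$; (iv) $T(R)$ is an absolutely flat ring and for every idempotent $x\in T(R)$ there is an idempotent $e\in R$ with $e/1=x$.
   Context: All rings are commutative with identity. A ring $R$ is a p.p. ring if every principal ideal of $R$ is a projective $R$-module; it is a p.f. ring if every principal ideal of $R$ is a flat $R$-module. $Z(R)=\{f\in R:\operatorname{Ann}(f)\neq 0\}$ is the set of zero-divisors and $T(R)=S^{-1}R$ with $S=R\setminus Z(R)$ is the total ring of fractions. A ring is absolutely flat if every module over it is flat (equivalently, von Neumann regular). *)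

theory Defs
  imports Main
begin

text \<open>Throughout, the commutative ring R is the whole type 'a :: comm_ring_1.
  Ideals of R (in particular principal ideals) are viewed as R-submodules of R.\<close>

definition zero_divisors :: "'a::comm_ring_1 set" where
  "zero_divisors = {f. \<exists>g. g \<noteq> 0 \<and> f * g = 0}"

definition idempotent :: "'a::comm_ring_1 \<Rightarrow> bool" where
  "idempotent e \<longleftrightarrow> e * e = e"

definition principal_ideal :: "'a::comm_ring_1 \<Rightarrow> 'a set" where
  "principal_ideal a = {a * r | r. True}"

text \<open>The free R-module R^(X) on an index set X (here X ranges over subsets of the
  ring's own type, which suffices for submodules of R): finitely supported functions.\<close>

definition free_mod :: "'a set \<Rightarrow> ('a \<Rightarrow> 'a::comm_ring_1) set" where
  "free_mod X = {v. finite {i. v i \<noteq> 0} \<and> (\<forall>i. i \<notin> X \<longrightarrow> v i = 0)}"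

definition is_submod :: "('a \<Rightarrow> 'a::comm_ring_1) set \<Rightarrow> bool" where
  "is_submod C \<longleftrightarrow> (\<lambda>i. 0) \<in> C \<and> (\<forall>u\<in>C. \<forall>v\<in>C. (\<lambda>i. u i + v i) \<in> C)
      \<and> (\<forall>r. \<forall>v\<in>C. (\<lambda>i. r * v i) \<in> C)"

definition linear_on_ideal :: "'a set \<Rightarrow> ('a \<Rightarrow> 'a \<Rightarrow> 'a::comm_ring_1) \<Rightarrow> bool" where
  "linear_on_ideal I f \<longleftrightarrow> (\<forall>x\<in>I. \<forall>y\<in>I. f (x + y) = (\<lambda>i. f x i + f y i))
      \<and> (\<forall>r. \<forall>x\<in>I. f (r * x) = (\<lambda>i. r * f x i))"

text \<open>A module is projective iff it is (isomorphic to) a direct summand of a free module.\<close>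

definition projective_ideal :: "'a::comm_ring_1 set \<Rightarrow> bool" where
  "projective_ideal I \<longleftrightarrow> (\<exists>(X::'a set) f C.
      f ` I \<subseteq> free_mod X \<and> linear_on_ideal I f \<and> inj_on f I \<and>
      C \<subseteq> free_mod X \<and> is_submod C \<and>
      (\<forall>v\<in>free_mod X. \<exists>p\<in>I. \<exists>c\<in>C. v = (\<lambda>i. f p i + c i)) \<and>
      f ` I \<inter> C = {(\<lambda>i. 0)})"

text \<open>Flatness via the equational criterion: every linear relation among elements of
  the module is a consequence of trivial relations.\<close>

definition flat_ideal :: "'a::comm_ring_1 set \<Rightarrow> bool" where
  "flat_ideal I \<longleftrightarrow> (\<forall>n (r::nat \<Rightarrow> 'a) (m::nat \<Rightarrow> 'a).
      (\<forall>i<n. m i \<in> I) \<and> (\<Sum>i<n. r i * m i) = 0 \<longrightarrow>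
      (\<exists>k (a::nat \<Rightarrow> nat \<Rightarrow> 'a) (y::nat \<Rightarrow> 'a).
         (\<forall>j<k. y j \<in> I) \<and> (\<forall>i<n. m i = (\<Sum>j<k. a i j * y j)) \<and>
         (\<forall>j<k. (\<Sum>i<n. r i * a i j) = 0)))"

definition pp_ring :: "'a::comm_ring_1 itself \<Rightarrow> bool" where
  "pp_ring _ \<longleftrightarrow> (\<forall>a::'a. projective_ideal (principal_ideal a))"

definition pf_ring :: "'a::comm_ring_1 itself \<Rightarrow> bool" where
  "pf_ring _ \<longleftrightarrow> (\<forall>a::'a. flat_ideal (principal_ideal a))"

definition mult_subset :: "'a::comm_ring_1 set \<Rightarrow> bool" where
  "mult_subset S \<longleftrightarrow> 1 \<in> S \<and> (\<forall>s\<in>S. \<forall>t\<in>S. s * t \<in> S)"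

text \<open>The fraction a/s is the equivalence class of (a,s) under
  (a,s) ~ (b,t) iff u(at - bs) = 0 for some u in S.\<close>

definition frac :: "'a::comm_ring_1 set \<Rightarrow> 'a \<Rightarrow> 'a \<Rightarrow> ('a \<times> 'a) set" where
  "frac S a s = {(b, t). t \<in> S \<and> (\<exists>u\<in>S. u * (b * s - a * t) = 0)}"

definition loc :: "'a::comm_ring_1 set \<Rightarrow> ('a \<times> 'a) set set" where
  "loc S = {frac S a s | a s. s \<in> S}"

definition loc_mult :: "'a::comm_ring_1 set \<Rightarrow> ('a \<times> 'a) set \<Rightarrow> ('a \<times> 'a) set \<Rightarrow> ('a \<times> 'a) set" where
  "loc_mult S x y = (let p = (SOME p. p \<in> x); q = (SOME q. q \<in> y)
      in frac S (fst p * fst q) (snd p * snd q))"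

definition loc_idempotent :: "'a::comm_ring_1 set \<Rightarrow> ('a \<times> 'a) set \<Rightarrow> bool" where
  "loc_idempotent S x \<longleftrightarrow> x \<in> loc S \<and> loc_mult S x x = x"

text \<open>Absolutely flat = von Neumann regular: every x has y with x^2 y = x.\<close>

definition loc_absolutely_flat :: "'a::comm_ring_1 set \<Rightarrow> bool" where
  "loc_absolutely_flat S \<longleftrightarrow>
     (\<forall>x\<in>loc S. \<exists>y\<in>loc S. loc_mult S (loc_mult S x x) y = x)"

text \<open>Total ring of fractions T(R) = S^{-1}R with S the non-zero-divisors.\<close>

definition nonzero_divisors :: "'a::comm_ring_1 itself \<Rightarrow> 'a set" where
  "nonzero_divisors _ = UNIV - zero_divisors"

end

theory Submission
  imports Defs
begin


lemma frac_ex: "mult_subset S \<Longrightarrow> s \<in> S \<Longrightarrow> (a, s) \<in> frac S a s"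
  by (auto simp: frac_def mult_subset_def intro!: bexI[of _ 1])

lemma frac_eq_iff:
  assumes M: "mult_subset S" and s: "s \<in> S" and t: "t \<in> S"
  shows "frac S a s = frac S b t \<longleftrightarrow> (\<exists>u\<in>S. u * (a * t - b * s) = 0)"
proof
  assume "frac S a s = frac S b t"
  moreover have "(a, s) \<in> frac S a s" using M s by (rule frac_ex)
  ultimately show "\<exists>u\<in>S. u * (a * t - b * s) = 0" by (simp add: frac_def)
next
  assume "\<exists>u\<in>S. u * (a * t - b * s) = 0"
  then obtain u where u: "u \<in> S" "u * (a * t) = u * (b * s)" by (auto simp: algebra_simps)
  have 1: "(c, w) \<in> frac S b t" if "(c, w) \<in> frac S a s" for c w
  proof -
    from that obtain v where w: "w \<in> S" and v: "v \<in> S" "v * (c * s) = v * (a * w)"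
      by (auto simp: frac_def algebra_simps)
    have "u * v * s \<in> S" using M u v s by (simp add: mult_subset_def)
    moreover have "(u * v * s) * (c * t - b * w) = 0"
    proof -
      have "(u * v * s) * (c * t) = u * t * (v * (c * s))" by (simp add: algebra_simps)
      also have "\<dots> = u * t * (v * (a * w))" using v by simp
      also have "\<dots> = v * w * (u * (a * t))" by (simp add: algebra_simps)
      also have "\<dots> = v * w * (u * (b * s))" using u by simp
      also have "\<dots> = (u * v * s) * (b * w)" by (simp add: algebra_simps)
      finally show ?thesis by (simp add: right_diff_distrib)
    qed
    ultimately show ?thesis using w by (auto simp: frac_def)
  qed
  have 2: "(c, w) \<in> frac S a s" if "(c, w) \<in> frac S b t" for c w
  proof -
    from that obtain v where w: "w \<in> S" and v: "v \<in> S" "v * (c * t) = v * (b * w)"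
      by (auto simp: frac_def algebra_simps)
    have "u * v * t \<in> S" using M u v t by (simp add: mult_subset_def)
    moreover have "(u * v * t) * (c * s - a * w) = 0"
    proof -
      have "(u * v * t) * (c * s) = u * s * (v * (c * t))" by (simp add: algebra_simps)
      also have "\<dots> = u * s * (v * (b * w))" using v by simp
      also have "\<dots> = v * w * (u * (b * s))" by (simp add: algebra_simps)
      also have "\<dots> = v * w * (u * (a * t))" using u by simp
      also have "\<dots> = (u * v * t) * (a * w)" by (simp add: algebra_simps)
      finally show ?thesis by (simp add: right_diff_distrib)
    qed
    ultimately show ?thesis using w by (auto simp: frac_def)
  qed
  show "frac S a s = frac S b t" using 1 2 by auto
qed

lemma loc_mult_frac:
  assumes M: "mult_subset S" and s: "s \<in> S" and t: "t \<in> S"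
  shows "loc_mult S (frac S a s) (frac S b t) = frac S (a * b) (s * t)"
proof -
  define p where "p = (SOME p. p \<in> frac S a s)"
  define q where "q = (SOME q. q \<in> frac S b t)"
  have p: "p \<in> frac S a s" unfolding p_def by (rule someI, rule frac_ex[OF M s])
  have q: "q \<in> frac S b t" unfolding q_def by (rule someI, rule frac_ex[OF M t])
  obtain p1 p2 where pp: "p = (p1, p2)" by fastforce
  obtain q1 q2 where qq: "q = (q1, q2)" by fastforce
  from p obtain u where p2: "p2 \<in> S" and u: "u \<in> S" "u * (p1 * s) = u * (a * p2)"
    by (auto simp: pp frac_def algebra_simps)
  from q obtain v where q2: "q2 \<in> S" and v: "v \<in> S" "v * (q1 * t) = v * (b * q2)"
    by (auto simp: qq frac_def algebra_simps)
  have "loc_mult S (frac S a s) (frac S b t) = frac S (p1 * q1) (p2 * q2)"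
    by (simp add: loc_mult_def Let_def p_def[symmetric] q_def[symmetric] pp qq)
  also have "\<dots> = frac S (a * b) (s * t)"
  proof (subst frac_eq_iff[OF M])
    show "p2 * q2 \<in> S" using M p2 q2 by (simp add: mult_subset_def)
    show "s * t \<in> S" using M s t by (simp add: mult_subset_def)
    have "u * v \<in> S" using M u v by (simp add: mult_subset_def)
    moreover have "(u * v) * (p1 * q1 * (s * t) - a * b * (p2 * q2)) = 0"
    proof -
      have "(u * v) * (p1 * q1 * (s * t)) = (u * (p1 * s)) * (v * (q1 * t))" by (simp add: algebra_simps)
      also have "\<dots> = (u * (a * p2)) * (v * (b * q2))" using u v by simp
      also have "\<dots> = (u * v) * (a * b * (p2 * q2))" by (simp add: algebra_simps)
      finally show ?thesis by (simp add: right_diff_distrib)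
    qed
    ultimately show "\<exists>w\<in>S. w * (p1 * q1 * (s * t) - a * b * (p2 * q2)) = 0" by blast
  qed
  finally show ?thesis .
qed

lemma T_cancel: "u \<in> nonzero_divisors R \<Longrightarrow> u * x = 0 \<Longrightarrow> x = 0"
  by (auto simp: nonzero_divisors_def zero_divisors_def)

lemma T_mem: "(\<And>g. u * g = 0 \<Longrightarrow> g = 0) \<Longrightarrow> u \<in> nonzero_divisors R"
  by (auto simp: nonzero_divisors_def zero_divisors_def)

lemma T_mult: "mult_subset (nonzero_divisors R)"
  unfolding mult_subset_def
proof (intro conjI ballI)
  show "1 \<in> nonzero_divisors R" by (rule T_mem) simp
  fix s t assume s: "s \<in> nonzero_divisors R" and t: "t \<in> nonzero_divisors R"
  show "s * t \<in> nonzero_divisors R"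
  proof (rule T_mem)
    fix g assume "s * t * g = 0"
    then have "s * (t * g) = 0" by (simp add: mult.assoc)
    then have "t * g = 0" by (rule T_cancel[OF s])
    then show "g = 0" by (rule T_cancel[OF t])
  qed
qed

lemma T_frac_eq:
  assumes s: "s \<in> nonzero_divisors R" and t: "t \<in> nonzero_divisors R"
  shows "frac (nonzero_divisors R) a s = frac (nonzero_divisors R) b t \<longleftrightarrow> a * t = b * s"
proof -
  have M: "mult_subset (nonzero_divisors R)" by (rule T_mult)
  have one: "1 \<in> nonzero_divisors R" using M by (simp add: mult_subset_def)
  have "(\<exists>u\<in>nonzero_divisors R. u * (a * t - b * s) = 0) \<longleftrightarrow> a * t = b * s"
  proof
    assume "\<exists>u\<in>nonzero_divisors R. u * (a * t - b * s) = 0"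
    then obtain u where "u \<in> nonzero_divisors R" "u * (a * t - b * s) = 0" by blast
    then have "a * t - b * s = 0" by (rule T_cancel)
    then show "a * t = b * s" by simp
  next
    assume "a * t = b * s"
    then show "\<exists>u\<in>nonzero_divisors R. u * (a * t - b * s) = 0" using one by auto
  qed
  then show ?thesis using frac_eq_iff[OF M s t] by simp
qed



definition PPe :: "'a::comm_ring_1 \<Rightarrow> 'a \<Rightarrow> bool" where
  "PPe a e \<longleftrightarrow> e * e = e \<and> a * e = a \<and> (\<forall>r. r * a = 0 \<longrightarrow> r * e = 0)"

definition PFe :: "'a::comm_ring_1 itself \<Rightarrow> bool" where
  "PFe R \<longleftrightarrow> (\<forall>a r::'a. r * a = 0 \<longrightarrow> (\<exists>s. s * a = 0 \<and> r * s = r))"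

lemma A3:
  assumes "\<forall>a::'a::comm_ring_1. \<exists>e. PPe a e"
  shows "loc_absolutely_flat (nonzero_divisors (R::'a itself))"
  unfolding loc_absolutely_flat_def
proof
  fix x assume "x \<in> loc (nonzero_divisors R)"
  then obtain a s where x: "x = frac (nonzero_divisors R) a s" and s: "s \<in> nonzero_divisors R"
    by (auto simp: loc_def)
  obtain e where "PPe a e" using assms by blast
  then have e: "e * e = e" "a * e = a" "\<And>r. r * a = 0 \<Longrightarrow> r * e = 0"
    unfolding PPe_def by blast+
  define t where "t = a + 1 - e"
  have t: "t \<in> nonzero_divisors R"
  proof (rule T_mem)
    fix g assume tg: "t * g = 0"
    have "e * (t * g) = (a * e) * g + e * g - (e * e) * g" unfolding t_def by (simp add: algebra_simps)
    also have "\<dots> = a * g" using e(1) e(2) by simp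
    finally have "a * g = 0" using tg by simp
    then have ga: "g * a = 0" by (simp add: mult.commute)
    then have "g * e = 0" by (rule e(3))
    then have eg: "e * g = 0" by (simp add: mult.commute)
    have "t * g = a * g + g - e * g" unfolding t_def by (simp add: algebra_simps)
    then show "g = 0" using tg eg \<open>a * g = 0\<close> by simp
  qed
  have at: "a * t = a * a" unfolding t_def using e(2) by (simp add: algebra_simps)
  have M: "mult_subset (nonzero_divisors R)" by (rule T_mult)
  have ss: "s * s \<in> nonzero_divisors R" using M s by (simp add: mult_subset_def)
  have sst: "s * s * t \<in> nonzero_divisors R" using M ss t by (simp add: mult_subset_def)
  show "\<exists>y\<in>loc (nonzero_divisors R).
          loc_mult (nonzero_divisors R) (loc_mult (nonzero_divisors R) x x) y = x"
  proof (intro bexI)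
    show "frac (nonzero_divisors R) s t \<in> loc (nonzero_divisors R)" using t by (auto simp: loc_def)
    have "loc_mult (nonzero_divisors R) (loc_mult (nonzero_divisors R) x x) (frac (nonzero_divisors R) s t)
        = frac (nonzero_divisors R) (a * a * s) (s * s * t)"
      unfolding x by (simp add: loc_mult_frac[OF M] s ss t)
    also have "\<dots> = x"
    proof -
      have "a * (s * s * t) = (a * t) * s * s" by (simp add: algebra_simps)
      also have "\<dots> = a * a * s * s" using at by simp
      finally have "a * a * s * s = a * (s * s * t)" by simp
      then show ?thesis unfolding x using sst s by (simp add: T_frac_eq)
    qed
    finally show "loc_mult (nonzero_divisors R) (loc_mult (nonzero_divisors R) x x) (frac (nonzero_divisors R) s t) = x" .
  qed
qed

lemma A4:
  assumes "loc_absolutely_flat (nonzero_divisors (R::'a::comm_ring_1 itself))"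
  shows "\<exists>b. \<exists>t\<in>nonzero_divisors R. a * a * b = a * t"
proof -
  let ?T = "nonzero_divisors R"
  have M: "mult_subset ?T" by (rule T_mult)
  have one: "1 \<in> ?T" using M by (simp add: mult_subset_def)
  have "frac ?T a 1 \<in> loc ?T" using one unfolding loc_def by blast
  then obtain y where "y \<in> loc ?T" and
    y: "loc_mult ?T (loc_mult ?T (frac ?T a 1) (frac ?T a 1)) y = frac ?T a 1"
    using assms unfolding loc_absolutely_flat_def by blast
  then obtain b t where yb: "y = frac ?T b t" and t: "t \<in> ?T"
    unfolding loc_def by blast
  have "loc_mult ?T (loc_mult ?T (frac ?T a 1) (frac ?T a 1)) y = frac ?T (a * a * b) (1 * 1 * t)"
    unfolding yb using one t M by (simp add: loc_mult_frac mult_subset_def)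
  then have "frac ?T (a * a * b) t = frac ?T a 1" using y by simp
  then have "a * a * b = a * t" using t one by (simp add: T_frac_eq)
  then show ?thesis using t by blast
qed

lemma A5:
  assumes "\<forall>a::'a::comm_ring_1. \<exists>e. PPe a e" and M: "mult_subset (S::'a set)" and x: "loc_idempotent S x"
  shows "\<exists>e. idempotent e \<and> frac S e 1 = x"
proof -
  obtain a s where xa: "x = frac S a s" and s: "s \<in> S" using x by (auto simp: loc_idempotent_def loc_def)
  have ss: "s * s \<in> S" using M s by (simp add: mult_subset_def)
  have one: "1 \<in> S" using M by (simp add: mult_subset_def)
  have "frac S (a * a) (s * s) = frac S a s" using x unfolding xa loc_idempotent_def
    by (simp add: loc_mult_frac[OF M s s])
  then obtain u where u: "u \<in> S" "u * (a * a * s - a * (s * s)) = 0"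
    using frac_eq_iff[OF M ss s] by blast
  obtain e where "PPe a e" using assms by blast
  then have e: "e * e = e" "a * e = a" "\<And>r. r * a = 0 \<Longrightarrow> r * e = 0"
    unfolding PPe_def by blast+
  define c where "c = u * s"
  have c: "c \<in> S" using M u s unfolding c_def by (simp add: mult_subset_def)
  have "(c * (a - s)) * a = 0" using u(2) unfolding c_def by (simp add: algebra_simps)
  then have ce: "c * (a - s) * e = 0" by (rule e(3))
  have "c * (e * 1 - a * s) = 0 \<or> True" by simp
  have key: "c * (e * s - a * 1) = 0"
  proof -
    have "c * (e * s - a * 1) = c * (e * s - a * e)" using e(2) by simp
    also have "\<dots> = - (c * (a - s) * e)" by (simp add: algebra_simps)
    finally show ?thesis using ce by simp
  qed
  have "frac S e 1 = frac S a s" using frac_eq_iff[OF M one s] key c by blast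
  then show ?thesis using e(1) xa by (auto simp: idempotent_def)
qed

lemma A6:
  assumes V: "loc_absolutely_flat (nonzero_divisors (R::'a::comm_ring_1 itself))"
    and L: "\<forall>x. loc_idempotent (nonzero_divisors R) x \<longrightarrow> (\<exists>e. idempotent e \<and> frac (nonzero_divisors R) e 1 = x)"
  shows "\<exists>e. PPe (a::'a) e"
proof -
  have M: "mult_subset (nonzero_divisors R)" by (rule T_mult)
  have one: "1 \<in> nonzero_divisors R" using M by (simp add: mult_subset_def)
  obtain b t where t: "t \<in> nonzero_divisors R" and ab: "a * a * b = a * t" using A4[OF V] by blast
  have tt: "t * t \<in> nonzero_divisors R" using M t by (simp add: mult_subset_def)
  have "loc_idempotent (nonzero_divisors R) (frac (nonzero_divisors R) (a * b) t)"
    unfolding loc_idempotent_def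
  proof
    show "frac (nonzero_divisors R) (a * b) t \<in> loc (nonzero_divisors R)" using t by (auto simp: loc_def)
    have "a * b * (a * b) * t = a * b * (t * t)"
    proof -
      have "a * b * (a * b) * t = (a * a * b) * b * t" by (simp add: algebra_simps)
      also have "\<dots> = a * b * (t * t)" using ab by (simp add: algebra_simps)
      finally show ?thesis .
    qed
    then show "loc_mult (nonzero_divisors R) (frac (nonzero_divisors R) (a * b) t) (frac (nonzero_divisors R) (a * b) t) =
      frac (nonzero_divisors R) (a * b) t"
      by (simp add: loc_mult_frac[OF M t t] T_frac_eq tt t)
  qed
  then obtain e where e: "idempotent e" and fe: "frac (nonzero_divisors R) e 1 = frac (nonzero_divisors R) (a * b) t"
    using L by blast
  have et: "e * t = a * b" using fe by (simp add: T_frac_eq one t)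
  have "t * (a * e - a) = 0"
  proof -
    have "t * (a * e - a) = a * (e * t) - a * t" by (simp add: algebra_simps)
    also have "\<dots> = 0" using et ab by (simp add: algebra_simps)
    finally show ?thesis .
  qed
  then have "a * e - a = 0" by (rule T_cancel[OF t])
  then have ae: "a * e = a" by simp
  have "r * e = 0" if "r * a = 0" for r
  proof -
    have "t * (r * e) = r * (e * t)" by (simp add: algebra_simps)
    also have "\<dots> = r * a * b" using et by (simp add: algebra_simps)
    finally have "t * (r * e) = r * a * b" .
    then have "t * (r * e) = 0" using that by simp
    then show ?thesis by (rule T_cancel[OF t])
  qed
  then show ?thesis using e ae by (auto simp: PPe_def idempotent_def)
qed

lemma A7:
  assumes V: "loc_absolutely_flat (nonzero_divisors (R::'a::comm_ring_1 itself))"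
    and P: "PFe R"
  shows "\<exists>e. PPe (a::'a) e"
proof -
  obtain b t where t: "t \<in> nonzero_divisors R" and ab: "a * a * b = a * t" using A4[OF V] by blast
  define r where "r = a * b - t"
  have "r * a = 0" unfolding r_def using ab by (simp add: algebra_simps)
  then obtain s where sa: "s * a = 0" and rs: "r * s = r" using P unfolding PFe_def by blast
  have all: "r' * s = r'" if "r' * a = 0" for r'
  proof -
    have "r' * r = (r' * a) * b - r' * t" unfolding r_def by (simp add: algebra_simps)
    then have "r' * r = - (r' * t)" using that by simp
    then have "r' * t = - (r' * r)" by simp
    then have rt: "r' * t = - (r' * r)" .
    have "t * (r' * s - r') = (r' * t) * s - r' * t" by (simp add: algebra_simps)
    also have "\<dots> = - (r' * r) * s + r' * r" using rt by simp
    also have "\<dots> = - (r' * (r * s)) + r' * r" by (simp add: algebra_simps)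
    finally have "t * (r' * s - r') = - (r' * (r * s)) + r' * r" .
    then have "t * (r' * s - r') = 0" using rs by simp
    then have "r' * s - r' = 0" by (rule T_cancel[OF t])
    then show ?thesis by simp
  qed
  have sss: "s * s = s" using all[OF sa] .
  have "(1 - s) * (1 - s) = 1 - s" using sss by (simp add: algebra_simps)
  moreover have "a * (1 - s) = a" using sa by (simp add: algebra_simps)
  moreover have "r' * (1 - s) = 0" if "r' * a = 0" for r' using all[OF that] by (simp add: algebra_simps)
  ultimately show ?thesis unfolding PPe_def by blast
qed

lemma A8:
  assumes "\<forall>a::'a::comm_ring_1. \<exists>e. PPe a e"
  shows "PFe (R::'a itself)"
  unfolding PFe_def
proof (intro allI impI)
  fix a r :: 'a assume ra: "r * a = 0"
  obtain e where "PPe a e" using assms by blast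
  then have e: "e * e = e" "a * e = a" "\<And>r. r * a = 0 \<Longrightarrow> r * e = 0"
    unfolding PPe_def by blast+
  have "(1 - e) * a = 0" using e(2) by (simp add: algebra_simps)
  moreover have "r * (1 - e) = r" using e(3)[OF ra] by (simp add: algebra_simps)
  ultimately have "(1 - e) * a = 0 \<and> r * (1 - e) = r" by (rule conjI)
  then show "\<exists>s. s * a = 0 \<and> r * s = r" by (rule exI)
qed



lemma pi_mem: "p \<in> principal_ideal a \<longleftrightarrow> (\<exists>r. p = a * r)"
  by (auto simp: principal_ideal_def)

lemma submod_sum:
  assumes "is_submod C" and "finite D"
  shows "(\<forall>i\<in>D. v i \<in> C) \<Longrightarrow> (\<lambda>j. \<Sum>i\<in>D. v i j) \<in> C"
  using assms(2)
proof (induction D rule: finite_induct)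
  case empty
  then show ?case using assms(1) by (simp add: is_submod_def)
next
  case (insert x F)
  have h1: "(\<lambda>j. \<Sum>i\<in>F. v i j) \<in> C" using insert by simp
  have h2: "v x \<in> C" using insert by simp
  have cl: "\<And>u w. u \<in> C \<Longrightarrow> w \<in> C \<Longrightarrow> (\<lambda>i. u i + w i) \<in> C"
    using assms(1) unfolding is_submod_def by blast
  have "(\<lambda>j. v x j + (\<Sum>i\<in>F. v i j)) \<in> C" using cl[OF h2 h1] by simp
  then show ?case using insert by simp
qed

lemma proj_PPe:
  assumes "projective_ideal (principal_ideal a)"
  shows "\<exists>e. PPe a e"
proof -
  let ?I = "principal_ideal a"
  obtain X f C where fI: "f ` ?I \<subseteq> free_mod X" and lin: "linear_on_ideal ?I f"
    and inj: "inj_on f ?I" and sub: "is_submod C"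
    and dec: "\<forall>v\<in>free_mod X. \<exists>p\<in>?I. \<exists>c\<in>C. v = (\<lambda>i. f p i + c i)"
    and cap: "f ` ?I \<inter> C = {(\<lambda>i. 0)}"
    using assms unfolding projective_ideal_def by blast
  have inI: "a * r \<in> ?I" for r by (auto simp: pi_mem)
  have aI: "a \<in> ?I" using inI[of 1] by simp
  have fr: "f (a * r) = (\<lambda>j. r * f a j)" for r
  proof -
    have "f (r * a) = (\<lambda>j. r * f a j)" using lin aI unfolding linear_on_ideal_def by blast
    then show ?thesis by (simp add: mult.commute)
  qed
  have fa: "f a \<in> free_mod X" using fI aI by blast
  define D where "D = {i. f a i \<noteq> 0}"
  have finD: "finite D" using fa by (simp add: free_mod_def D_def)
  have DX: "D \<subseteq> X" using fa by (auto simp: free_mod_def D_def)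
  have "\<forall>i\<in>X. \<exists>r. \<exists>c\<in>C. (\<lambda>j. if j = i then 1 else 0) = (\<lambda>j. r * f a j + c j)"
  proof
    fix i assume iX: "i \<in> X"
    have "(\<lambda>j. if j = i then 1 else 0) \<in> free_mod X"
    proof -
      have "{j. (if j = i then 1 else 0) \<noteq> (0::'a)} \<subseteq> {i}" by auto
      then have "finite {j. (if j = i then 1 else 0) \<noteq> (0::'a)}" by (rule finite_subset) simp
      then show ?thesis using iX unfolding free_mod_def by auto
    qed
    then obtain p c where "p \<in> ?I" "c \<in> C" and pc: "(\<lambda>j. if j = i then 1 else 0) = (\<lambda>j. f p j + c j)"
      using dec by blast
    then obtain r where "p = a * r" by (auto simp: pi_mem)
    then show "\<exists>r. \<exists>c\<in>C. (\<lambda>j. if j = i then 1 else 0) = (\<lambda>j. r * f a j + c j)"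
      using pc \<open>c \<in> C\<close> fr by auto
  qed
  then obtain r c where rc: "\<And>i. i \<in> X \<Longrightarrow> c i \<in> C \<and> (\<lambda>j. if j = i then 1 else 0) = (\<lambda>j. r i * f a j + c i j)"
    by metis
  define t where "t = (\<Sum>i\<in>D. f a i * r i)"
  have decomp: "f a j = t * f a j + (\<Sum>i\<in>D. f a i * c i j)" for j
  proof -
    have "(\<Sum>i\<in>D. f a i * (if j = i then 1 else 0)) = (\<Sum>i\<in>D. if j = i then f a j else 0)"
      by (rule sum.cong) auto
    also have "\<dots> = (if j \<in> D then f a j else 0)" using finD by simp
    also have "\<dots> = f a j" by (auto simp: D_def)
    finally have 1: "f a j = (\<Sum>i\<in>D. f a i * (if j = i then 1 else 0))" by simp
    have 2: "(\<Sum>i\<in>D. f a i * (if j = i then 1 else 0)) = (\<Sum>i\<in>D. f a i * (r i * f a j + c i j))"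
    proof (rule sum.cong)
      fix i assume "i \<in> D"
      then have "i \<in> X" using DX by blast
      then have "(if j = i then 1 else 0) = r i * f a j + c i j" using rc[of i] by metis
      then show "f a i * (if j = i then 1 else 0) = f a i * (r i * f a j + c i j)" by simp
    qed simp
    have 3: "(\<Sum>i\<in>D. f a i * (r i * f a j + c i j)) = t * f a j + (\<Sum>i\<in>D. f a i * c i j)"
      unfolding t_def by (simp add: distrib_left sum.distrib sum_distrib_right mult.assoc)
    show ?thesis using 1 2 3 by simp
  qed
  define cc where "cc = (\<lambda>j. \<Sum>i\<in>D. f a i * c i j)"
  have ccC: "cc \<in> C" unfolding cc_def
  proof (rule submod_sum[OF sub finD, of "\<lambda>i j. f a i * c i j"], intro ballI)
    fix i assume "i \<in> D"
    then have "c i \<in> C" using DX rc by blast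
    then show "(\<lambda>j. f a i * c i j) \<in> C" using sub unfolding is_submod_def by blast
  qed
  have ccf: "cc = f (a * (1 - t))"
  proof
    fix j
    have "cc j = f a j - t * f a j" using decomp[of j] unfolding cc_def by (simp add: algebra_simps)
    also have "\<dots> = (1 - t) * f a j" by (simp add: algebra_simps)
    also have "\<dots> = f (a * (1 - t)) j" using fr[of "1 - t"] by simp
    finally show "cc j = f (a * (1 - t)) j" .
  qed
  have "cc \<in> f ` ?I \<inter> C" using ccC ccf inI by blast
  then have "cc = (\<lambda>i. 0)" using cap by blast
  also have "\<dots> = f (a * 0)" using fr[of 0] by simp
  finally have "f (a * (1 - t)) = f (a * 0)" using ccf by simp
  then have "a * (1 - t) = a * 0" using inj inI unfolding inj_on_def by blast
  then have at: "a * t = a" by (simp add: algebra_simps)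
  have ann: "r' * t = 0" if "r' * a = 0" for r'
  proof -
    have "f (a * r') = f (a * 0)" using that by (simp add: mult.commute)
    then have "(\<lambda>j. r' * f a j) = (\<lambda>j. 0 * f a j)" using fr by metis
    then have z: "r' * f a i = 0" for i by (metis mult_zero_left)
    have "r' * t = (\<Sum>i\<in>D. (r' * f a i) * r i)" unfolding t_def
      by (simp add: sum_distrib_left mult.assoc)
    also have "\<dots> = 0" using z by simp
    finally show ?thesis .
  qed
  have "(1 - t) * a = 0" using at by (simp add: algebra_simps)
  then have "(1 - t) * t = 0" by (rule ann)
  then have "t * t = t" by (simp add: algebra_simps)
  then show ?thesis using at ann unfolding PPe_def by blast
qed



lemma PPe_proj:
  assumes "PPe a e"
  shows "projective_ideal (principal_ideal a)"
proof -
  let ?I = "principal_ideal a"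
  have e: "e * e = e" "a * e = a" "\<And>r. r * a = 0 \<Longrightarrow> r * e = 0"
    using assms unfolding PPe_def by blast+
  define g where "g p = (SOME r. p = a * r) * e" for p
  have g: "g (a * r) = r * e" for r
  proof -
    define r' where "r' = (SOME r'. a * r = a * r')"
    have "a * r = a * r'" unfolding r'_def by (rule someI) (rule refl)
    then have "(r' - r) * a = 0" by (simp add: algebra_simps)
    then have "(r' - r) * e = 0" by (rule e(3))
    then have "r' * e = r * e" by (simp add: algebra_simps)
    then show ?thesis unfolding g_def r'_def by simp
  qed
  define f where "f p = (\<lambda>i::'a. if i = 0 then g p else 0)" for p
  have fa: "f (a * r) = (\<lambda>i. if i = 0 then r * e else 0)" for r
    unfolding f_def g by simp
  define C where "C = {v. \<exists>x. v = (\<lambda>i::'a. if i = 0 then (1 - e) * x else 0)}"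
  have fm: "(\<lambda>i::'a. if i = 0 then y else 0) \<in> free_mod {0}" for y
  proof -
    have "{i::'a. (if i = 0 then y else 0) \<noteq> 0} \<subseteq> {0}" by auto
    then have "finite {i::'a. (if i = 0 then y else 0) \<noteq> 0}" by (rule finite_subset) simp
    then show ?thesis unfolding free_mod_def by auto
  qed
  have 1: "f ` ?I \<subseteq> free_mod {0}"
  proof
    fix v assume "v \<in> f ` ?I"
    then obtain r where "v = f (a * r)" by (auto simp: pi_mem)
    then show "v \<in> free_mod {0}" using fa fm by simp
  qed
  have 2: "linear_on_ideal ?I f"
    unfolding linear_on_ideal_def
  proof (intro conjI ballI allI)
    fix x y assume "x \<in> ?I" "y \<in> ?I"
    then obtain r1 r2 where xy: "x = a * r1" "y = a * r2" by (auto simp: pi_mem)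
    have "x + y = a * (r1 + r2)" using xy by (simp add: algebra_simps)
    then have "f (x + y) = (\<lambda>i. if i = 0 then (r1 + r2) * e else 0)" using fa by simp
    then show "f (x + y) = (\<lambda>i. f x i + f y i)" unfolding xy fa by (auto simp: distrib_right)
  next
    fix r x assume "x \<in> ?I"
    then obtain r1 where x: "x = a * r1" by (auto simp: pi_mem)
    have "r * x = a * (r * r1)" using x by (simp add: algebra_simps)
    then have "f (r * x) = (\<lambda>i. if i = 0 then (r * r1) * e else 0)" using fa by simp
    then show "f (r * x) = (\<lambda>i. r * f x i)" unfolding x fa by (auto simp: mult.assoc)
  qed
  have 3: "inj_on f ?I"
  proof (rule inj_onI)
    fix x y assume "x \<in> ?I" "y \<in> ?I" and fxy: "f x = f y"
    then obtain r1 r2 where xy: "x = a * r1" "y = a * r2" by (auto simp: pi_mem)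
    have "r1 * e = r2 * e" using fun_cong[OF fxy, of 0] xy fa by simp
    then have "a * e * r1 = a * e * r2" by (simp add: algebra_simps)
    then show "x = y" using xy e(2) by simp
  qed
  have 4: "C \<subseteq> free_mod {0}" unfolding C_def using fm by auto
  have 5: "is_submod C"
    unfolding is_submod_def
  proof (intro conjI ballI allI)
    have "(\<lambda>i::'a. 0::'a) = (\<lambda>i. if i = 0 then (1 - e) * 0 else 0)" by auto
    then show "(\<lambda>i::'a. 0::'a) \<in> C" unfolding C_def by blast
  next
    fix u v assume "u \<in> C" "v \<in> C"
    then obtain x y where uv: "u = (\<lambda>i. if i = 0 then (1 - e) * x else 0)" "v = (\<lambda>i. if i = 0 then (1 - e) * y else 0)"
      unfolding C_def by blast
    have "(\<lambda>i. u i + v i) = (\<lambda>i. if i = 0 then (1 - e) * (x + y) else 0)"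
      using uv by (auto simp: algebra_simps)
    then show "(\<lambda>i. u i + v i) \<in> C" unfolding C_def by blast
  next
    fix r v assume "v \<in> C"
    then obtain y where v: "v = (\<lambda>i. if i = 0 then (1 - e) * y else 0)"
      unfolding C_def by blast
    have "(\<lambda>i. r * v i) = (\<lambda>i. if i = 0 then (1 - e) * (r * y) else 0)"
      using v by (auto simp: algebra_simps)
    then show "(\<lambda>i. r * v i) \<in> C" unfolding C_def by blast
  qed
  have 6: "\<forall>v\<in>free_mod {0}. \<exists>p\<in>?I. \<exists>c\<in>C. v = (\<lambda>i. f p i + c i)"
  proof
    fix v :: "'a \<Rightarrow> 'a" assume "v \<in> free_mod {0}"
    then have v0: "\<And>i. i \<noteq> 0 \<Longrightarrow> v i = 0" unfolding free_mod_def by auto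
    define c where "c = (\<lambda>i::'a. if i = 0 then (1 - e) * v 0 else 0)"
    have cC: "c \<in> C" unfolding C_def c_def by blast
    have "v = (\<lambda>i. f (a * v 0) i + c i)"
    proof
      fix i show "v i = f (a * v 0) i + c i"
        using v0[of i] unfolding fa c_def by (cases "i = 0") (auto simp: algebra_simps)
    qed
    moreover have "a * v 0 \<in> ?I" by (auto simp: pi_mem)
    ultimately show "\<exists>p\<in>?I. \<exists>c\<in>C. v = (\<lambda>i. f p i + c i)" using cC by blast
  qed
  have 7: "f ` ?I \<inter> C = {(\<lambda>i. 0)}"
  proof
    show "f ` ?I \<inter> C \<subseteq> {(\<lambda>i. 0)}"
    proof
      fix v assume "v \<in> f ` ?I \<inter> C"
      then have vI: "v \<in> f ` ?I" and vC: "v \<in> C" by auto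
      from vI obtain p where "p \<in> ?I" and vp: "v = f p" by blast
      then obtain r where "p = a * r" by (auto simp: pi_mem)
      then have vr: "v = f (a * r)" using vp by simp
      from vC obtain x where vx: "v = (\<lambda>i. if i = 0 then (1 - e) * x else 0)"
        unfolding C_def by blast
      have "v 0 = r * e" using vr fa by simp
      moreover have "v 0 = (1 - e) * x" using vx by simp
      ultimately have "r * e = (1 - e) * x" by simp
      then have re: "r * e * e = (1 - e) * x * e" by simp
      have "r * e = r * (e * e)" using e(1) by simp
      also have "\<dots> = r * e * e" by (simp add: mult.assoc)
      also have "\<dots> = (1 - e) * x * e" using re by simp
      also have "\<dots> = x * (e - e * e)" by (simp add: algebra_simps)
      also have "\<dots> = 0" using e(1) by simp
      finally have "r * e = 0" .
      then have "v = (\<lambda>i. 0)" using vr fa by auto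
      then show "v \<in> {(\<lambda>i. 0)}" by simp
    qed
  next
    have "(\<lambda>i::'a. 0::'a) = f (a * 0)" using fa[of 0] by auto
    moreover have "a * 0 \<in> ?I" unfolding pi_mem by blast
    moreover have "(\<lambda>i::'a. 0::'a) \<in> C" using 5 unfolding is_submod_def by blast
    ultimately show "{(\<lambda>i. 0)} \<subseteq> f ` ?I \<inter> C" by auto
  qed
  show ?thesis unfolding projective_ideal_def
    using 1 2 3 4 5 6 7 by blast
qed

lemma pp_iff: "pp_ring (R::'a::comm_ring_1 itself) \<longleftrightarrow> (\<forall>a::'a. \<exists>e. PPe a e)"
  unfolding pp_ring_def using proj_PPe PPe_proj by blast


lemma flat_PF:
  assumes F: "flat_ideal (principal_ideal a)" and ra: "r * a = 0"
  shows "\<exists>s. s * a = 0 \<and> r * s = r"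
proof -
  let ?I = "principal_ideal a"
  have mI: "\<forall>i<(1::nat). (\<lambda>_. a) i \<in> ?I" unfolding pi_mem by (auto intro: exI[of _ 1])
  have rel: "(\<Sum>i<(1::nat). (\<lambda>_. r) i * (\<lambda>_. a) i) = 0" using ra by simp
  note ex = mp[OF spec[OF spec[OF spec[OF F[unfolded flat_ideal_def], of 1], of "\<lambda>_. r"], of "\<lambda>_. a"] conjI[OF mI rel]]
  then obtain k where "\<exists>(A::nat \<Rightarrow> nat \<Rightarrow> 'a) (y::nat \<Rightarrow> 'a). (\<forall>j<k. y j \<in> ?I) \<and> (\<forall>i<(1::nat). a = (\<Sum>j<k. A i j * y j))
    \<and> (\<forall>j<k. (\<Sum>i<(1::nat). r * A i j) = 0)" by (rule exE)
  then obtain A where "\<exists>(y::nat \<Rightarrow> 'a). (\<forall>j<k. y j \<in> ?I) \<and> (\<forall>i<(1::nat). a = (\<Sum>j<k. A i j * y j))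
    \<and> (\<forall>j<k. (\<Sum>i<(1::nat). r * A i j) = 0)" by (rule exE)
  then obtain y where H: "(\<forall>j<k. y j \<in> ?I) \<and> (\<forall>i<(1::nat). a = (\<Sum>j<k. A i j * y j))
    \<and> (\<forall>j<k. (\<Sum>i<(1::nat). r * A i j) = 0)" by (rule exE)
  have yI: "\<forall>j<k. y j \<in> ?I" using H by (rule conjunct1)
  have my: "\<forall>i<(1::nat). a = (\<Sum>j<k. A i j * y j)" using H by (rule conjunct1[OF conjunct2])
  have rA: "\<forall>j<k. (\<Sum>i<(1::nat). r * A i j) = 0" using H by (rule conjunct2[OF conjunct2])
  have "\<forall>j. \<exists>z. j < k \<longrightarrow> y j = a * z" using yI unfolding pi_mem by blast
  then obtain z where z: "\<And>j. j < k \<Longrightarrow> y j = a * z j" by metis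
  define t where "t = (\<Sum>j<k. A 0 j * z j)"
  have "a = (\<Sum>j<k. A 0 j * y j)" using my by simp
  also have "\<dots> = (\<Sum>j<k. a * (A 0 j * z j))"
    by (rule sum.cong) (simp_all add: z algebra_simps)
  also have "\<dots> = a * t" unfolding t_def by (simp add: sum_distrib_left)
  finally have at: "a * t = a" by simp
  have r0: "r * A 0 j = 0" if "j < k" for j using rA that by simp
  have "r * t = (\<Sum>j<k. (r * A 0 j) * z j)" unfolding t_def
    by (simp add: sum_distrib_left mult.assoc)
  also have "\<dots> = 0" using r0 by simp
  finally have rt: "r * t = 0" .
  have "(1 - t) * a = 0" using at by (simp add: algebra_simps)
  moreover have "r * (1 - t) = r" using rt by (simp add: algebra_simps)
  ultimately have "(1 - t) * a = 0 \<and> r * (1 - t) = r" by (rule conjI)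
  then show ?thesis by (rule exI)
qed

lemma PF_flat:
  assumes P: "PFe (R::'a::comm_ring_1 itself)"
  shows "flat_ideal (principal_ideal (a::'a))"
  unfolding flat_ideal_def
proof (intro allI impI)
  let ?I = "principal_ideal a"
  fix n and r m :: "nat \<Rightarrow> 'a"
  assume H: "(\<forall>i<n. m i \<in> ?I) \<and> (\<Sum>i<n. r i * m i) = 0"
  have "\<forall>i. \<exists>x. i < n \<longrightarrow> m i = a * x" using H unfolding pi_mem by blast
  then obtain x where x: "\<And>i. i < n \<Longrightarrow> m i = a * x i" by metis
  define c where "c = (\<Sum>i<n. r i * x i)"
  have "c * a = (\<Sum>i<n. r i * x i * a)" unfolding c_def by (rule sum_distrib_right)
  also have "\<dots> = (\<Sum>i<n. r i * (a * x i))" by (rule sum.cong) (simp_all add: algebra_simps)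
  also have "\<dots> = (\<Sum>i<n. r i * m i)" by (rule sum.cong) (simp_all add: x)
  also have "\<dots> = 0" using H by simp
  finally have "c * a = 0" .
  then obtain s where sa: "s * a = 0" and cs: "c * s = c" using P unfolding PFe_def by blast
  define A where "A = (\<lambda>i (j::nat). x i * (1 - s))"
  define y where "y = (\<lambda>j::nat. a)"
  have 1: "\<forall>j<(1::nat). y j \<in> ?I" unfolding y_def pi_mem by (auto intro: exI[of _ 1])
  have 2: "\<forall>i<n. m i = (\<Sum>j<(1::nat). A i j * y j)"
  proof (intro allI impI)
    fix i assume "i < n"
    have "A i 0 * y 0 = a * x i - x i * (s * a)" unfolding A_def y_def by (simp add: algebra_simps)
    also have "\<dots> = m i" using sa x[OF \<open>i < n\<close>] by simp
    finally show "m i = (\<Sum>j<(1::nat). A i j * y j)" by simp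
  qed
  have 3: "\<forall>j<(1::nat). (\<Sum>i<n. r i * A i j) = 0"
  proof (intro allI impI)
    fix j :: nat
    have "(\<Sum>i<n. r i * A i j) = c * (1 - s)" unfolding A_def c_def
      by (simp add: sum_distrib_right mult.assoc)
    also have "\<dots> = c - c * s" by (simp add: algebra_simps)
    also have "\<dots> = 0" using cs by simp
    finally show "(\<Sum>i<n. r i * A i j) = 0" .
  qed
  show "\<exists>k (A::nat \<Rightarrow> nat \<Rightarrow> 'a) (y::nat \<Rightarrow> 'a). (\<forall>j<k. y j \<in> ?I) \<and>
          (\<forall>i<n. m i = (\<Sum>j<k. A i j * y j)) \<and> (\<forall>j<k. (\<Sum>i<n. r i * A i j) = 0)"
    by (intro exI[of _ 1] exI[of _ A] exI[of _ y] conjI) (rule 1, rule 2, rule 3)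
qed

lemma pf_iff: "pf_ring (R::'a::comm_ring_1 itself) \<longleftrightarrow> PFe R"
proof
  assume "pf_ring R"
  then show "PFe R" unfolding PFe_def pf_ring_def using flat_PF by blast
next
  assume "PFe R"
  then show "pf_ring R" unfolding pf_ring_def using PF_flat by blast
qed

lemma prop_comb:
  "(PP \<longleftrightarrow> P) \<Longrightarrow> (PF \<longleftrightarrow> Q) \<Longrightarrow> (P \<Longrightarrow> V) \<Longrightarrow> (P \<Longrightarrow> Q) \<Longrightarrow> (P \<Longrightarrow> LS) \<Longrightarrow>
   (LS \<Longrightarrow> LT) \<Longrightarrow> (V \<Longrightarrow> LT \<Longrightarrow> P) \<Longrightarrow> (V \<Longrightarrow> Q \<Longrightarrow> P) \<Longrightarrow>
   (PP \<longleftrightarrow> PF \<and> V) \<and> (PF \<and> V \<longleftrightarrow> V \<and> LS) \<and> (V \<and> LS \<longleftrightarrow> V \<and> LT)"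
  by blast

theorem theorem2p1:
  fixes R :: "'a::comm_ring_1 itself"
  defines "T \<equiv> nonzero_divisors R"
  shows "(pp_ring R \<longleftrightarrow> pf_ring R \<and> loc_absolutely_flat T)
       \<and> (pf_ring R \<and> loc_absolutely_flat T \<longleftrightarrow>
            loc_absolutely_flat T \<and>
            (\<forall>S::'a set. mult_subset S \<longrightarrow>
               (\<forall>x. loc_idempotent S x \<longrightarrow> (\<exists>e. idempotent e \<and> frac S e 1 = x))))
       \<and> ((loc_absolutely_flat T \<and>
            (\<forall>S::'a set. mult_subset S \<longrightarrow>
               (\<forall>x. loc_idempotent S x \<longrightarrow> (\<exists>e. idempotent e \<and> frac S e 1 = x))))
          \<longleftrightarrow>
          (loc_absolutely_flat T \<and>
            (\<forall>x. loc_idempotent T x \<longrightarrow> (\<exists>e. idempotent e \<and> frac T e 1 = x))))"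
proof -
  let ?P = "\<forall>a::'a. \<exists>e. PPe a e"
  let ?LS = "\<forall>S::'a set. mult_subset S \<longrightarrow>
               (\<forall>x. loc_idempotent S x \<longrightarrow> (\<exists>e. idempotent e \<and> frac S e 1 = x))"
  let ?LT = "\<forall>x. loc_idempotent T x \<longrightarrow> (\<exists>e. idempotent e \<and> frac T e 1 = x)"
  have MT: "mult_subset T" unfolding T_def by (rule T_mult)
  have i1: "pp_ring R \<longleftrightarrow> ?P" by (rule pp_iff)
  have i2: "pf_ring R \<longleftrightarrow> PFe R" by (rule pf_iff)
  have P_V: "?P \<Longrightarrow> loc_absolutely_flat T" unfolding T_def by (rule A3)
  have P_PF: "?P \<Longrightarrow> PFe R" by (rule A8)
  have P_LS: "?P \<Longrightarrow> ?LS"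
  proof (intro allI impI)
    fix S :: "'a set" and x
    assume "?P" "mult_subset S" "loc_idempotent S x"
    then show "\<exists>e. idempotent e \<and> frac S e 1 = x" by (rule A5)
  qed
  have LS_LT: "?LS \<Longrightarrow> ?LT"
  proof -
    assume H: ?LS
    have "mult_subset T \<longrightarrow> ?LT" using spec[OF H, of T] .
    then show ?LT using MT by (rule mp)
  qed
  have VLT_P: "loc_absolutely_flat T \<Longrightarrow> ?LT \<Longrightarrow> ?P"
  proof
    fix a :: 'a
    assume "loc_absolutely_flat T" ?LT
    then show "\<exists>e. PPe a e" unfolding T_def by (rule A6)
  qed
  have VPF_P: "loc_absolutely_flat T \<Longrightarrow> PFe R \<Longrightarrow> ?P"
  proof
    fix a :: 'a
    assume "loc_absolutely_flat T" "PFe R"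
    then show "\<exists>e. PPe a e" unfolding T_def by (rule A7)
  qed
  show ?thesis by (rule prop_comb[OF i1 i2 P_V P_PF P_LS LS_LT VLT_P VPF_P])
qed

end
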